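(* Let $W=W_0\supset W_1\supset W_2\supset\cdots$ be a filtered Lie algebra with $\bigcap_{i\ge 0}W_i=0$ and $[W_i,W_j]\subset W_{i+j}$. Let $v^0,v^1,v^2,\dots$ be elements of $W$ such that $v^{q+1}-v^{q}\in W_{q+1}$ for all $q\ge 0$. Put $K_i=W_i\oplus W_i$ for $i\ge 0$ (and $K_i=K_0$ for $i<0$), and define linear maps $\partial_q:K_0\to K_0$ by $\partial_{-1}=0$ and $\partial_q(x,y)=([v^q,y],0)$ for $q\ge 0$. For $r\ge -1$ and integers $p$ let $Z^r_p=\{z\in K_p:\ \partial_r z\in K_{p+r}\}$. Then for every $r\ge 0$ and every $p\ge 0$: if $z\in Z^r_p$ or $z\in Z^{r-1}_p$, then $\partial_r z-\partial_{r-1}z\in Z^{r-1}_{p+r}$.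
   Context: This is the complex used to model normal form computations: the first summand of $K_i$ is the space in which the normal form lives, the second the space of transformations, and $v^q$ is the vector field after $q$ normalization steps. *)

theory Defs
  imports Complex_Main "HOL-Library.Product_Plus"
begin

definition lie_algebra :: "('k::field \<Rightarrow> 'v::ab_group_add \<Rightarrow> 'v) \<Rightarrow> ('v \<Rightarrow> 'v \<Rightarrow> 'v) \<Rightarrow> bool" where
  "lie_algebra sc br \<longleftrightarrow>
     vector_space sc
   \<and> (\<forall>x. Vector_Spaces.linear sc sc (br x))
   \<and> (\<forall>y. Vector_Spaces.linear sc sc (\<lambda>x. br x y))
   \<and> (\<forall>x. br x x = 0)
   \<and> (\<forall>x y z. br x (br y z) + br y (br z x) + br z (br x y) = 0)"

definition filtered_lie_algebra ::
  "('k::field \<Rightarrow> 'v::ab_group_add \<Rightarrow> 'v) \<Rightarrow> ('v \<Rightarrow> 'v \<Rightarrow> 'v) \<Rightarrow> (nat \<Rightarrow> 'v set) \<Rightarrow> bool" where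
  "filtered_lie_algebra sc br W \<longleftrightarrow>
     lie_algebra sc br
   \<and> W 0 = UNIV
   \<and> (\<forall>i. module.subspace sc (W i))
   \<and> (\<forall>i. W (Suc i) \<subseteq> W i)
   \<and> (\<Inter>i. W i) = {0}
   \<and> (\<forall>i j x y. x \<in> W i \<longrightarrow> y \<in> W j \<longrightarrow> br x y \<in> W (i + j))"

text \<open>K_i = W_i \<oplus> W_i for i \<ge> 0, and K_i = K_0 for i < 0.\<close>
definition Kfil :: "(nat \<Rightarrow> 'v set) \<Rightarrow> int \<Rightarrow> ('v \<times> 'v) set" where
  "Kfil W i = W (nat i) \<times> W (nat i)"

definition dq :: "('v::ab_group_add \<Rightarrow> 'v \<Rightarrow> 'v) \<Rightarrow> (nat \<Rightarrow> 'v) \<Rightarrow> int \<Rightarrow> 'v \<times> 'v \<Rightarrow> 'v \<times> 'v" where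
  "dq br v q z = (if q < 0 then (0, 0) else (br (v (nat q)) (snd z), 0))"

definition Zsp :: "(nat \<Rightarrow> 'v set) \<Rightarrow> ('v::ab_group_add \<Rightarrow> 'v \<Rightarrow> 'v) \<Rightarrow> (nat \<Rightarrow> 'v) \<Rightarrow> int \<Rightarrow> int \<Rightarrow> ('v \<times> 'v) set" where
  "Zsp W br v r p = {z \<in> Kfil W p. dq br v r z \<in> Kfil W (p + r)}"

end

theory Submission
  imports Defs
begin

theorem mainTheorem1:
  fixes sc :: "'k::field \<Rightarrow> 'v::ab_group_add \<Rightarrow> 'v"
    and br :: "'v \<Rightarrow> 'v \<Rightarrow> 'v"
    and W :: "nat \<Rightarrow> 'v set"
    and v :: "nat \<Rightarrow> 'v"
    and r p :: int
    and z :: "'v \<times> 'v"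
  assumes "filtered_lie_algebra sc br W"
    and "\<And>q. v (Suc q) - v q \<in> W (Suc q)"
    and "r \<ge> 0" and "p \<ge> 0"
    and "z \<in> Zsp W br v r p \<or> z \<in> Zsp W br v (r - 1) p"
  shows "dq br v r z - dq br v (r - 1) z \<in> Zsp W br v (r - 1) (p + r)"
proof -
  have F: "lie_algebra sc br" "\<And>i. module.subspace sc (W i)"
    "\<And>i j x y. x \<in> W i \<Longrightarrow> y \<in> W j \<Longrightarrow> br x y \<in> W (i + j)"
    using assms(1) unfolding filtered_lie_algebra_def by auto
  have L1: "\<And>x. module_hom sc sc (br x)" and L2: "\<And>y. module_hom sc sc (\<lambda>x. br x y)"
    using F(1) unfolding lie_algebra_def by (auto dest: Vector_Spaces.linear.axioms(3))
  have br0: "\<And>x. br x 0 = 0" by (rule module_hom.zero[OF L1])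
  have brd: "\<And>a b y. br (a - b) y = br a y - br b y"
  proof -
    fix a b y
    show "br (a - b) y = br a y - br b y" by (rule module_hom.diff[OF L2[of y]])
  qed
  have VS: "vector_space sc" using F(1) unfolding lie_algebra_def by simp
  have M: "module sc" using VS by (simp add: module_iff_vector_space)
  have W0: "\<And>i. 0 \<in> W i" by (rule module.subspace_0[OF M F(2)])
  obtain x y where z: "z = (x, y)" by (cases z)
  have yW: "y \<in> W (nat p)" using assms(5) z by (auto simp: Zsp_def Kfil_def)
  show ?thesis
  proof (cases "r = 0")
    case True
    have "v 0 \<in> W 0" using assms(1) unfolding filtered_lie_algebra_def by simp
    from F(3)[OF this yW] have A: "br (v 0) y \<in> W (nat (p + r))" using True by simp
    have "dq br v r z - dq br v (r - 1) z = (br (v 0) y, 0)" using True z by (simp add: dq_def)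
    moreover have "dq br v (r - 1) (br (v 0) y, 0) = (0, 0)" using True by (simp add: dq_def)
    ultimately show ?thesis using A W0 unfolding Zsp_def Kfil_def by simp
  next
    case False
    then obtain n where n: "r = int (Suc n)" using assms(3)
    proof -
      have "nat r \<noteq> 0" using False assms(3) by simp
      then obtain n where "nat r = Suc n" using not0_implies_Suc by blast
      then show ?thesis using that assms(3) by (metis int_nat_eq nat_0_le)
    qed
    have B: "br (v (Suc n) - v n) y \<in> W (Suc n + nat p)" by (rule F(3)[OF assms(2) yW])
    have E: "nat (p + r) = Suc n + nat p" using n assms(4) by simp
    have "nat (r - 1) = n" using n by simp
    moreover have "nat r = Suc n" using n by simp
    ultimately have "dq br v r z - dq br v (r - 1) z = (br (v (Suc n) - v n) y, 0)"
      using n z by (simp add: dq_def brd del: of_nat_Suc)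
    moreover have "dq br v (r - 1) (br (v (Suc n) - v n) y, 0) = (0, 0)"
      by (simp add: dq_def br0)
    ultimately show ?thesis using B E W0 unfolding Zsp_def Kfil_def by simp
  qed
qed

end
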